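(* Let $K$ be a field of characteristic $\neq 2$ and $A\in K[t]\setminus K$ non-constant. Then the equation $x^2+y^2+z^2=Axyz$ has a fundamental Markoff triple if and only if $K$ contains a square root $i$ of $-1$. Moreover, if $i\in K$, every fundamental Markoff triple has the form $(0,\varepsilon if,f)$ for some $f\in K[t]\setminus K$ and $\varepsilon\in\{\pm1\}$.
   Context: Solutions are triples $(x,y,z)\in K[t]^3$ with $x^2+y^2+z^2=Axyz$. The degree of the zero polynomial is $-\infty$. The height is $\max\{\deg x,\deg y,\deg z\}$. A Markoff triple is a solution with positive height and $\deg x\le\deg y\le\deg z$; it is fundamental if moreover $\deg y=\deg z$. *)

theory Defs
  imports "HOL-Computational_Algebra.Polynomial" "HOL-Library.Extended_Real"
begin

definition pdeg :: "'a::zero poly \<Rightarrow> ereal" where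
  "pdeg p = (if p = 0 then -\<infinity> else ereal (real (degree p)))"

definition is_solution :: "'a::comm_ring_1 poly \<Rightarrow> 'a poly \<Rightarrow> 'a poly \<Rightarrow> 'a poly \<Rightarrow> bool" where
  "is_solution A x y z \<longleftrightarrow> x^2 + y^2 + z^2 = A * x * y * z"

definition height :: "'a::zero poly \<Rightarrow> 'a poly \<Rightarrow> 'a poly \<Rightarrow> ereal" where
  "height x y z = max (pdeg x) (max (pdeg y) (pdeg z))"

definition markoff_triple :: "'a::comm_ring_1 poly \<Rightarrow> 'a poly \<Rightarrow> 'a poly \<Rightarrow> 'a poly \<Rightarrow> bool" where
  "markoff_triple A x y z \<longleftrightarrow> is_solution A x y z \<and> height x y z > 0
     \<and> pdeg x \<le> pdeg y \<and> pdeg y \<le> pdeg z"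

definition fundamental_markoff :: "'a::comm_ring_1 poly \<Rightarrow> 'a poly \<Rightarrow> 'a poly \<Rightarrow> 'a poly \<Rightarrow> bool" where
  "fundamental_markoff A x y z \<longleftrightarrow> markoff_triple A x y z \<and> pdeg y = pdeg z"

end

theory Submission
  imports Defs
begin

lemma pdeg_eq_iff: "pdeg (p::'a::zero poly) = pdeg q \<longleftrightarrow> (p = 0 \<longleftrightarrow> q = 0) \<and> (p \<noteq> 0 \<longrightarrow> degree p = degree q)"
  by (auto simp: pdeg_def)

lemma pdeg_le_iff: "q \<noteq> 0 \<Longrightarrow> pdeg (p::'a::zero poly) \<le> pdeg q \<longleftrightarrow> (p = 0 \<or> degree p \<le> degree q)"
  by (auto simp: pdeg_def)

lemma fund_facts:
  fixes A :: "'a::field poly"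
  assumes "degree A > 0" "fundamental_markoff A x y z"
  shows "x = 0 \<and> y \<noteq> 0 \<and> z \<noteq> 0 \<and> degree z > 0 \<and> y^2 = - (z^2)"
proof -
  have sol: "x^2 + y^2 + z^2 = A * x * y * z" and h: "height x y z > 0"
    and xy: "pdeg x \<le> pdeg y" and yz: "pdeg y = pdeg z"
    using assms(2) by (auto simp: fundamental_markoff_def markoff_triple_def is_solution_def)
  have z0: "z \<noteq> 0"
  proof
    assume "z = 0"
    then have "y = 0" using yz by (simp add: pdeg_eq_iff)
    then have "x = 0" using xy by (cases "x = 0") (auto simp: pdeg_def)
    then show False using h \<open>z = 0\<close> \<open>y = 0\<close> by (simp add: height_def pdeg_def)
  qed
  have y0: "y \<noteq> 0" and dyz: "degree y = degree z" using yz z0 by (auto simp: pdeg_eq_iff)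
  have dx: "x = 0 \<or> degree x \<le> degree z" using xy y0 dyz by (simp add: pdeg_le_iff)
  have dz: "degree z > 0"
  proof (rule ccontr)
    assume "\<not> degree z > 0"
    then have "degree z = 0" by simp
    then have "pdeg x \<le> 0" "pdeg y \<le> 0" "pdeg z \<le> 0" using dx dyz z0 y0
      by (auto simp: pdeg_def)
    then show False using h leD by (auto simp add: height_def less_max_iff_disj)
  qed
  have x0: "x = 0"
  proof (rule ccontr)
    assume "x \<noteq> 0"
    then have dxz: "degree x \<le> degree z" using dx by simp
    have "degree (x^2 + y^2 + z^2) \<le> 2 * degree z"
    proof -
      have "degree (x^2) \<le> 2 * degree z" using degree_power_le[of x 2] dxz by simp
      moreover have "degree (y^2) \<le> 2 * degree z" using degree_power_le[of y 2] dyz by simp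
      moreover have "degree (z^2) \<le> 2 * degree z" using degree_power_le[of z 2] by simp
      ultimately show ?thesis
        by (meson degree_add_le)
    qed
    moreover have "degree (A * x * y * z) = degree A + degree x + degree y + degree z"
    proof -
      have A0: "A \<noteq> 0" using assms(1) by auto
      then show ?thesis using \<open>x \<noteq> 0\<close> y0 z0 by (simp add: degree_mult_eq)
    qed
    ultimately show False using sol dyz assms(1) by simp
  qed
  have "y^2 + z^2 = 0" using sol x0 by (simp add: power2_eq_square)
  then have "y^2 = - (z^2)" by (simp add: eq_neg_iff_add_eq_0)
  then show ?thesis using x0 y0 z0 dz by simp
qed

theorem lemma2p3:
  fixes A :: "'a::field poly"
  assumes "CHAR('a) \<noteq> 2"
    and "degree A > 0"
  shows "((\<exists>x y z. fundamental_markoff A x y z) \<longleftrightarrow> (\<exists>i::'a. i^2 = -1))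
    \<and> (\<forall>i::'a. i^2 = -1 \<longrightarrow>
         (\<forall>x y z. fundamental_markoff A x y z \<longrightarrow>
            (\<exists>f \<epsilon>. degree f > 0 \<and> \<epsilon> \<in> {1, -1::'a} \<and>
               x = 0 \<and> y = smult (\<epsilon> * i) f \<and> z = f)))"
proof (intro conjI allI impI iffI)
  assume "\<exists>x y z. fundamental_markoff A x y z"
  then obtain x y z where f: "fundamental_markoff A x y z" by blast
  from fund_facts[OF assms(2) f] have y0: "y \<noteq> 0" and z0: "z \<noteq> 0" and e: "y^2 = - (z^2)"
    by auto
  have "lead_coeff (y^2) = lead_coeff (- (z^2))" using e by simp
  then have "lead_coeff y ^ 2 = - (lead_coeff z ^ 2)" by (simp add: lead_coeff_power)
  then have "(lead_coeff y / lead_coeff z)^2 = -1" using z0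
    by (simp add: power_divide field_simps)
  then show "\<exists>i::'a. i^2 = -1" by blast
next
  assume "\<exists>i::'a. i^2 = -1"
  then obtain i :: 'a where i: "i^2 = -1" by blast
  have "fundamental_markoff A 0 (smult i [:0,1:]) [:0,1:]"
  proof -
    have i0: "i \<noteq> 0" using i by auto
    have "(smult i [:0,1:])^2 = smult (i^2) ([:0,1:]^2 :: 'a poly)"
      by (simp add: power2_eq_square)
    then have "(smult i [:0,1:])^2 + [:0,1:]^2 = (0::'a poly)"
      using i by simp
    then show ?thesis using i0
      by (simp add: fundamental_markoff_def markoff_triple_def is_solution_def height_def pdeg_def)
  qed
  then show "\<exists>x y z. fundamental_markoff A x y z" by blast
next
  fix i :: 'a and x y z
  assume i: "i^2 = -1" and f: "fundamental_markoff A x y z"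
  from fund_facts[OF assms(2) f] have x0: "x = 0" and dz: "degree z > 0" and e: "y^2 = - (z^2)"
    by auto
  have "(y - smult i z) * (y + smult i z) = y^2 - smult (i^2) (z^2)"
    by (simp add: algebra_simps power2_eq_square)
  also have "\<dots> = 0" using e i by simp
  finally have "y - smult i z = 0 \<or> y + smult i z = 0" by simp
  then have "y = smult i z \<or> y = smult (-i) z" by (auto simp: add_eq_0_iff)
  then show "\<exists>f \<epsilon>. degree f > 0 \<and> \<epsilon> \<in> {1, -1::'a} \<and>
               x = 0 \<and> y = smult (\<epsilon> * i) f \<and> z = f"
    using x0 dz by (metis insertCI mult_1 mult_minus1)
qed

end
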